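(* Let $(V,v)$ be a pair of upper and lower probabilities on $(\Omega,\mathcal{F})$ and $\theta:\Omega\to\Omega$ a measurable map preserving $V$. (i) $\theta$ is ergodic with respect to $V$ if and only if for every $\theta$-invariant set $B$, $V(B)=0$ or $V(B^c)=0$. (ii) If $\theta$ is ergodic with respect to $V$, then $\theta$ is ergodic with respect to $v$.
   Context: For a nonempty set $\mathcal{P}$ of finitely additive probabilities on $\mathcal{F}$, $V(A)=\sup_{P\in\mathcal{P}}P(A)$, $v(A)=\inf_{P\in\mathcal{P}}P(A)$. $\theta$ preserves a capacity $\mu$ if $\mu(\theta^{-1}A)=\mu(A)$ for all $A\in\mathcal{F}$ (note $\theta$ preserves $V$ iff it preserves $v$). A set $B$ is $\theta$-invariant if $\theta^{-1}B=B$. For a capacity $\mu$ preserved by $\theta$, $\theta$ is ergodic with respect to $\mu$ if for every $\theta$-invariant $B$: $\mu(B)\in\{0,1\}$, and $\mu(B)=0$ or $\mu(B^c)=0$. *)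

theory Defs
  imports "HOL-Analysis.Analysis"
begin

text \<open>A finitely additive probability on the sigma-algebra of a measurable space M
  (only its values on measurable sets matter).\<close>
definition fa_prob :: "'a measure \<Rightarrow> ('a set \<Rightarrow> real) \<Rightarrow> bool" where
  "fa_prob M P \<longleftrightarrow>
     P (space M) = 1 \<and>
     (\<forall>A\<in>sets M. 0 \<le> P A) \<and>
     (\<forall>A\<in>sets M. \<forall>B\<in>sets M. A \<inter> B = {} \<longrightarrow> P (A \<union> B) = P A + P B)"

definition upper_prob :: "('a set \<Rightarrow> real) set \<Rightarrow> 'a set \<Rightarrow> real" where
  "upper_prob \<P> A = (SUP P\<in>\<P>. P A)"

definition lower_prob :: "('a set \<Rightarrow> real) set \<Rightarrow> 'a set \<Rightarrow> real" where
  "lower_prob \<P> A = (INF P\<in>\<P>. P A)"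

definition preimg :: "'a measure \<Rightarrow> ('a \<Rightarrow> 'a) \<Rightarrow> 'a set \<Rightarrow> 'a set" where
  "preimg M \<theta> A = \<theta> -` A \<inter> space M"

definition preserves :: "'a measure \<Rightarrow> ('a \<Rightarrow> 'a) \<Rightarrow> ('a set \<Rightarrow> real) \<Rightarrow> bool" where
  "preserves M \<theta> \<mu> \<longleftrightarrow> (\<forall>A\<in>sets M. \<mu> (preimg M \<theta> A) = \<mu> A)"

definition invariant_set :: "'a measure \<Rightarrow> ('a \<Rightarrow> 'a) \<Rightarrow> 'a set \<Rightarrow> bool" where
  "invariant_set M \<theta> B \<longleftrightarrow> B \<in> sets M \<and> preimg M \<theta> B = B"

definition ergodic :: "'a measure \<Rightarrow> ('a \<Rightarrow> 'a) \<Rightarrow> ('a set \<Rightarrow> real) \<Rightarrow> bool" where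
  "ergodic M \<theta> \<mu> \<longleftrightarrow> preserves M \<theta> \<mu> \<and>
     (\<forall>B. invariant_set M \<theta> B \<longrightarrow>
        (\<mu> B = 0 \<or> \<mu> B = 1) \<and> (\<mu> B = 0 \<or> \<mu> (space M - B) = 0))"

end

theory Submission
  imports Defs
begin

lemma fa_basic:
  assumes "fa_prob M P" "A \<in> sets M"
  shows "0 \<le> P A" "P A \<le> 1" "P (space M - A) = 1 - P A"
proof -
  have c: "space M - A \<in> sets M" using assms(2) by auto
  have "P (A \<union> (space M - A)) = P A + P (space M - A)"
    using assms c unfolding fa_prob_def by blast
  moreover have "A \<union> (space M - A) = space M" using assms(2) sets.sets_into_space by blast
  ultimately have e: "P A + P (space M - A) = 1" using assms(1) unfolding fa_prob_def by simp
  show "0 \<le> P A" using assms unfolding fa_prob_def by blast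
  have "0 \<le> P (space M - A)" using assms c unfolding fa_prob_def by blast
  then show "P A \<le> 1" using e by linarith
  show "P (space M - A) = 1 - P A" using e by linarith
qed

locale setup_ctx =
  fixes M :: "'a measure" and Ps :: "('a set \<Rightarrow> real) set"
  assumes ne: "Ps \<noteq> {}" and fa: "\<forall>P\<in>Ps. fa_prob M P"
begin

lemma bdd_above: "A \<in> sets M \<Longrightarrow> bdd_above ((\<lambda>P. P A) ` Ps)"
  using fa fa_basic(2) by (intro bdd_aboveI[where M=1]) blast

lemma bdd_below: "A \<in> sets M \<Longrightarrow> bdd_below ((\<lambda>P. P A) ` Ps)"
  using fa fa_basic(1) by (intro bdd_belowI[where m=0]) blast

lemma upper_ge: "A \<in> sets M \<Longrightarrow> P \<in> Ps \<Longrightarrow> P A \<le> upper_prob Ps A"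
  unfolding upper_prob_def using bdd_above by (intro cSUP_upper) auto

lemma lower_le: "A \<in> sets M \<Longrightarrow> P \<in> Ps \<Longrightarrow> lower_prob Ps A \<le> P A"
  unfolding lower_prob_def using bdd_below by (intro cINF_lower) auto

lemma upper_zero: "A \<in> sets M \<Longrightarrow> upper_prob Ps A = 0 \<Longrightarrow> P \<in> Ps \<Longrightarrow> P A = 0"
  using upper_ge[of A P] fa fa_basic(1)[of M P A] by auto

lemma upper_le: "(\<And>P. P \<in> Ps \<Longrightarrow> P A \<le> c) \<Longrightarrow> upper_prob Ps A \<le> c"
  unfolding upper_prob_def using ne by (intro cSUP_least) auto

lemma lower_ge: "(\<And>P. P \<in> Ps \<Longrightarrow> c \<le> P A) \<Longrightarrow> c \<le> lower_prob Ps A"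
  unfolding lower_prob_def using ne by (intro cINF_greatest) auto

lemma upper_const: "(\<And>P. P \<in> Ps \<Longrightarrow> P A = c) \<Longrightarrow> upper_prob Ps A = c"
proof -
  assume h: "\<And>P. P \<in> Ps \<Longrightarrow> P A = c"
  then have "(\<lambda>P. P A) ` Ps = {c}" using ne by auto
  then show ?thesis unfolding upper_prob_def by simp
qed

lemma lower_const: "(\<And>P. P \<in> Ps \<Longrightarrow> P A = c) \<Longrightarrow> lower_prob Ps A = c"
proof -
  assume h: "\<And>P. P \<in> Ps \<Longrightarrow> P A = c"
  then have "(\<lambda>P. P A) ` Ps = {c}" using ne by auto
  then show ?thesis unfolding lower_prob_def by simp
qed

lemma lower_upper: assumes A: "A \<in> sets M"
  shows "lower_prob Ps A = 1 - upper_prob Ps (space M - A)"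
proof (rule antisym)
  have c: "space M - A \<in> sets M" using A by auto
  obtain P0 where P0: "P0 \<in> Ps" using ne by auto
  have "upper_prob Ps (space M - A) \<le> 1 - lower_prob Ps A"
    by (rule upper_le) (use lower_le[OF A] fa fa_basic(3)[OF _ A] in fastforce)
  then show "lower_prob Ps A \<le> 1 - upper_prob Ps (space M - A)" by linarith
  have "1 - upper_prob Ps (space M - A) \<le> lower_prob Ps A"
    by (rule lower_ge) (use upper_ge[OF c] fa fa_basic(3)[OF _ A] in fastforce)
  then show "1 - upper_prob Ps (space M - A) \<le> lower_prob Ps A" .
qed

end

theorem proposition6:
  fixes M :: "'a measure" and \<P> :: "('a set \<Rightarrow> real) set" and \<theta> :: "'a \<Rightarrow> 'a"
  assumes "\<P> \<noteq> {}"
    and "\<forall>P\<in>\<P>. fa_prob M P"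
    and "\<theta> \<in> M \<rightarrow>\<^sub>M M"
    and "preserves M \<theta> (upper_prob \<P>)"
  shows "(ergodic M \<theta> (upper_prob \<P>) \<longleftrightarrow>
           (\<forall>B. invariant_set M \<theta> B \<longrightarrow>
              upper_prob \<P> B = 0 \<or> upper_prob \<P> (space M - B) = 0))
         \<and> (ergodic M \<theta> (upper_prob \<P>) \<longrightarrow> ergodic M \<theta> (lower_prob \<P>))"
proof -
  interpret setup_ctx M \<P> using assms(1,2) by unfold_locales
  have key: "(upper_prob \<P> B = 0 \<and> lower_prob \<P> B = 0 \<and> lower_prob \<P> (space M - B) = 1)
     \<or> (upper_prob \<P> B = 1 \<and> lower_prob \<P> B = 1 \<and> lower_prob \<P> (space M - B) = 0)"
    if B: "B \<in> sets M" and h: "upper_prob \<P> B = 0 \<or> upper_prob \<P> (space M - B) = 0" for B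
  proof -
    have c: "space M - B \<in> sets M" using B by auto
    have cc: "space M - (space M - B) = B" using B sets.sets_into_space by blast
    show ?thesis
    proof (cases "upper_prob \<P> B = 0")
      case True
      then have z: "\<And>P. P \<in> \<P> \<Longrightarrow> P B = 0" using upper_zero[OF B] by blast
      then have "\<And>P. P \<in> \<P> \<Longrightarrow> P (space M - B) = 1" using fa fa_basic(3)[OF _ B] by fastforce
      then show ?thesis using True z lower_const by auto
    next
      case False
      then have h2: "upper_prob \<P> (space M - B) = 0" using h by auto
      then have z: "\<And>P. P \<in> \<P> \<Longrightarrow> P (space M - B) = 0" using upper_zero[OF c] by blast
      then have "\<And>P. P \<in> \<P> \<Longrightarrow> P B = 1" using fa fa_basic(3)[OF _ B] by fastforce
      then show ?thesis using z lower_const upper_const by auto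
    qed
  qed
  have i: "ergodic M \<theta> (upper_prob \<P>) \<longleftrightarrow>
           (\<forall>B. invariant_set M \<theta> B \<longrightarrow>
              upper_prob \<P> B = 0 \<or> upper_prob \<P> (space M - B) = 0)"
  proof
    assume e: "ergodic M \<theta> (upper_prob \<P>)"
    show "\<forall>B. invariant_set M \<theta> B \<longrightarrow>
              upper_prob \<P> B = 0 \<or> upper_prob \<P> (space M - B) = 0"
    proof (intro allI impI)
      fix B assume "invariant_set M \<theta> B"
      then have "(upper_prob \<P> B = 0 \<or> upper_prob \<P> B = 1) \<and>
          (upper_prob \<P> B = 0 \<or> upper_prob \<P> (space M - B) = 0)"
        using e unfolding ergodic_def by blast
      then show "upper_prob \<P> B = 0 \<or> upper_prob \<P> (space M - B) = 0" by blast
    qed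
  next
    assume h: "\<forall>B. invariant_set M \<theta> B \<longrightarrow>
              upper_prob \<P> B = 0 \<or> upper_prob \<P> (space M - B) = 0"
    show "ergodic M \<theta> (upper_prob \<P>)"
      unfolding ergodic_def
    proof (rule conjI[OF assms(4)], intro allI impI)
      fix B assume iB: "invariant_set M \<theta> B"
      then have B: "B \<in> sets M" unfolding invariant_set_def by auto
      from key[OF B] h iB
      show "(upper_prob \<P> B = 0 \<or> upper_prob \<P> B = 1) \<and>
          (upper_prob \<P> B = 0 \<or> upper_prob \<P> (space M - B) = 0)" by auto
    qed
  qed
  have pres: "preserves M \<theta> (lower_prob \<P>)"
    unfolding preserves_def
  proof
    fix A assume A: "A \<in> sets M"
    have pA: "preimg M \<theta> A \<in> sets M" unfolding preimg_def
      using assms(3) A measurable_sets by blast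
    have c: "space M - A \<in> sets M" using A by auto
    have eq: "space M - preimg M \<theta> A = preimg M \<theta> (space M - A)"
      unfolding preimg_def using measurable_space[OF assms(3)] by auto
    show "lower_prob \<P> (preimg M \<theta> A) = lower_prob \<P> A"
    proof -
      have "upper_prob \<P> (preimg M \<theta> (space M - A)) = upper_prob \<P> (space M - A)"
        using assms(4) c unfolding preserves_def by blast
      then show ?thesis using lower_upper[OF A] lower_upper[OF pA] eq by simp
    qed
  qed
  have ii: "ergodic M \<theta> (upper_prob \<P>) \<longrightarrow> ergodic M \<theta> (lower_prob \<P>)"
  proof
    assume e: "ergodic M \<theta> (upper_prob \<P>)"
    show "ergodic M \<theta> (lower_prob \<P>)"
      unfolding ergodic_def
    proof (rule conjI[OF pres], intro allI impI)
      fix B assume iB: "invariant_set M \<theta> B"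
      then have B: "B \<in> sets M" unfolding invariant_set_def by auto
      have "upper_prob \<P> B = 0 \<or> upper_prob \<P> (space M - B) = 0" using e iB i by blast
      from key[OF B this]
      show "(lower_prob \<P> B = 0 \<or> lower_prob \<P> B = 1) \<and>
            (lower_prob \<P> B = 0 \<or> lower_prob \<P> (space M - B) = 0)" by auto
    qed
  qed
  show ?thesis using i ii by blast
qed

end
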